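(* Let $\Sigma=\{a,b\}$ and let $L_F:\Sigma^\omega\to\mathbb R$ be defined by $L_F(w)=0$ if $w$ contains infinitely many $a$'s and $L_F(w)=1$ otherwise. Then: (1) $L_F$ is the language of some automaton in NLimAvg; (2) $L_F$ is the language of some automaton in PosLimAvg; (3) $L_F$ is not the language of any automaton in AsLimAvg.
   Context: A probabilistic weighted automaton over a finite alphabet $\Sigma$ is a tuple $A=(Q,\rho_I,\Sigma,\delta,\gamma)$ where $Q$ is a finite set of states, $\rho_I$ is a probability distribution on $Q$, $\delta:Q\times\Sigma\to\mathcal D(Q)$ assigns to each state and letter a probability distribution on $Q$, and $\gamma:Q\times\Sigma\times Q\to\mathbb Q$ is a weight function. A run over an infinite word $w=\sigma_1\sigma_2\dots$ is a sequence $r=q_0\sigma_1q_1\sigma_2\dots$ with $\rho_I(q_0)>0$ and $\delta(q_i,\sigma_{i+1})(q_{i+1})>0$ for all $i$; its weight sequence is $\gamma(r)=v_0v_1\dots$ with $v_i=\gamma(q_i,\sigma_{i+1},q_{i+1})$. For each $w$, the probabilities of finite run prefixes induce a probability measure $\mathbb P^A$ on runs over $w$. With $\mathsf{LimAvg}(v)=\liminf_{n}\frac1n\sum_{i=0}^{n-1}v_i$: PosLimAvg automata define $L^{>0}_A(w)=\sup\{\eta\mid \mathbb P^A(\{r:\mathsf{LimAvg}(\gamma(r))\ge\eta\})>0\}$; AsLimAvg automata define $L^{=1}_A(w)=\sup\{\eta\mid \mathbb P^A(\{r:\mathsf{LimAvg}(\gamma(r))\ge\eta\})=1\}$; NLimAvg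 automata (non-probabilistic: initial states with $\rho_I(q)>0$, transitions with $\delta(q,\sigma)(q')>0$) define $L^{\max}_A(w)=\sup\{\mathsf{LimAvg}(\gamma(r))\mid r\text{ run over }w\}$. *)

theory Defs
  imports "HOL-Probability.Probability"
begin

text \<open>The alphabet Sigma = {a, b}. Infinite words are functions nat => letter;
  the word sigma_1 sigma_2 ... is represented by w with w i = sigma_(i+1).\<close>
datatype letter = La | Lb

text \<open>Probabilistic weighted automata. States are natural numbers drawn from a
  finite set Q (so that the class of all finite-state automata can be quantified over).\<close>
record pwa =
  states :: "nat set"
  init :: "nat pmf"
  trans :: "nat \<Rightarrow> letter \<Rightarrow> nat pmf"
  weight :: "nat \<Rightarrow> letter \<Rightarrow> nat \<Rightarrow> rat"

definition wf_pwa :: "pwa \<Rightarrow> bool" where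
  "wf_pwa A \<longleftrightarrow> finite (states A) \<and> set_pmf (init A) \<subseteq> states A \<and>
     (\<forall>q\<in>states A. \<forall>\<sigma>. set_pmf (trans A q \<sigma>) \<subseteq> states A)"

definition is_run :: "pwa \<Rightarrow> (nat \<Rightarrow> letter) \<Rightarrow> (nat \<Rightarrow> nat) \<Rightarrow> bool" where
  "is_run A w r \<longleftrightarrow> pmf (init A) (r 0) > 0 \<and>
     (\<forall>i. pmf (trans A (r i) (w i)) (r (Suc i)) > 0)"

definition run_space :: "(nat \<Rightarrow> nat) measure" where
  "run_space = PiM UNIV (\<lambda>_. count_space UNIV)"

definition prefix_prob :: "pwa \<Rightarrow> (nat \<Rightarrow> letter) \<Rightarrow> nat \<Rightarrow> (nat \<Rightarrow> nat) \<Rightarrow> real" where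
  "prefix_prob A w n r = pmf (init A) (r 0) * (\<Prod>i<n. pmf (trans A (r i) (w i)) (r (Suc i)))"

definition run_measure :: "pwa \<Rightarrow> (nat \<Rightarrow> letter) \<Rightarrow> (nat \<Rightarrow> nat) measure" where
  "run_measure A w = (THE M. sets M = sets run_space \<and> prob_space M \<and>
     (\<forall>n r. emeasure M {x \<in> space run_space. \<forall>i\<le>n. x i = r i} = ennreal (prefix_prob A w n r)))"

definition weights :: "pwa \<Rightarrow> (nat \<Rightarrow> letter) \<Rightarrow> (nat \<Rightarrow> nat) \<Rightarrow> nat \<Rightarrow> rat" where
  "weights A w r i = weight A (r i) (w i) (r (Suc i))"

definition LimAvg :: "(nat \<Rightarrow> rat) \<Rightarrow> ereal" where
  "LimAvg v = liminf (\<lambda>n. ereal (real_of_rat (\<Sum>i<n. v i) / real n))"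

definition L_pos :: "pwa \<Rightarrow> (nat \<Rightarrow> letter) \<Rightarrow> ereal" where
  "L_pos A w = Sup (ereal ` {\<eta>::real. emeasure (run_measure A w)
      {r \<in> space (run_measure A w). LimAvg (weights A w r) \<ge> ereal \<eta>} > 0})"

definition L_as :: "pwa \<Rightarrow> (nat \<Rightarrow> letter) \<Rightarrow> ereal" where
  "L_as A w = Sup (ereal ` {\<eta>::real. emeasure (run_measure A w)
      {r \<in> space (run_measure A w). LimAvg (weights A w r) \<ge> ereal \<eta>} = 1})"

definition L_max :: "pwa \<Rightarrow> (nat \<Rightarrow> letter) \<Rightarrow> ereal" where
  "L_max A w = Sup {LimAvg (weights A w r) | r. is_run A w r}"

definition L_F :: "(nat \<Rightarrow> letter) \<Rightarrow> real" where
  "L_F w = (if infinite {i. w i = La} then 0 else 1)"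

end

theory Submission
  imports Defs
begin


lemma space_run_space[simp]: "space run_space = UNIV"
  by (auto simp: run_space_def space_PiM)

definition cyl :: "nat \<Rightarrow> (nat \<Rightarrow> nat) \<Rightarrow> (nat \<Rightarrow> nat) set" where
  "cyl n r = {x \<in> space run_space. \<forall>i\<le>n. x i = r i}"

lemma cyl_sets: "cyl n r \<in> sets run_space"
  unfolding cyl_def run_space_def by measurable

lemma runspace_eqI:
  assumes sM: "sets M = sets run_space" and sN: "sets N = sets run_space" and fin: "finite_measure M"
  and eq: "\<And>n r. emeasure M (cyl n r) = emeasure N (cyl n r)"
  shows "M = N"
proof (rule measure_eqI_PiM_infinite[where I=UNIV and M="\<lambda>_. count_space UNIV"])
  show "sets M = sets (PiM UNIV (\<lambda>_. count_space UNIV))" using sM by (simp add: run_space_def)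
  show "sets N = sets (PiM UNIV (\<lambda>_. count_space UNIV))" using sN by (simp add: run_space_def)
  show "finite_measure M" by fact
  fix A J assume J: "finite (J::nat set)" "J \<subseteq> UNIV"
  obtain n where n: "J \<subseteq> {..n}" using J(1) finite_nat_iff_bounded_le by auto
  define R where "R = {r \<in> PiE {..n} (\<lambda>_. UNIV::nat set). \<forall>j\<in>J. r j \<in> A j}"
  have eqU: "prod_emb UNIV (\<lambda>_. count_space UNIV) J (PiE J A) = (\<Union>r\<in>R. cyl n r)"
  proof (intro set_eqI iffI)
    fix x assume x: "x \<in> prod_emb UNIV (\<lambda>_. count_space UNIV) J (PiE J A)"
    have "restrict x {..n} \<in> R" using x n unfolding R_def prod_emb_def by (auto simp: PiE_iff)
    moreover have "x \<in> cyl n (restrict x {..n})" by (simp add: cyl_def)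
    ultimately show "x \<in> (\<Union>r\<in>R. cyl n r)" by blast
  next
    fix x assume "x \<in> (\<Union>r\<in>R. cyl n r)"
    then obtain r where r: "r \<in> R" "x \<in> cyl n r" by blast
    then show "x \<in> prod_emb UNIV (\<lambda>_. count_space UNIV) J (PiE J A)"
      using n unfolding R_def prod_emb_def cyl_def by (auto simp: PiE_iff subset_eq)
  qed
  have cR: "countable R"
    unfolding R_def by (rule countable_subset[OF _ countable_PiE[of "{..n}" "\<lambda>_. UNIV"]]) auto
  have dR: "disjoint_family_on (cyl n) R"
  unfolding disjoint_family_on_def
  proof (intro ballI impI)
    fix r s assume rs: "r \<in> R" "s \<in> R" "r \<noteq> s"
    then obtain i where i: "r i \<noteq> s i" by auto
    have "i \<le> n"
    proof (rule ccontr)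
      assume "\<not> i \<le> n" then have "r i = undefined" "s i = undefined" using rs unfolding R_def by auto
      with i show False by simp
    qed
    then show "cyl n r \<inter> cyl n s = {}" using i unfolding cyl_def by auto
  qed
  have "emeasure M (\<Union>r\<in>R. cyl n r) = (\<integral>\<^sup>+r. emeasure M (cyl n r) \<partial>count_space R)"
    by (rule emeasure_UN_countable) (use cR dR cyl_sets sM in auto)
  also have "\<dots> = (\<integral>\<^sup>+r. emeasure N (cyl n r) \<partial>count_space R)" by (simp add: eq)
  also have "\<dots> = emeasure N (\<Union>r\<in>R. cyl n r)"
    by (rule emeasure_UN_countable[symmetric]) (use cR dR cyl_sets sN in auto)
  finally show "emeasure M (prod_emb UNIV (\<lambda>_. count_space UNIV) J (PiE J A)) =
       emeasure N (prod_emb UNIV (\<lambda>_. count_space UNIV) J (PiE J A))" by (simp add: eqU)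
qed

definition Dp :: "pwa \<Rightarrow> (nat \<times> (letter \<times> nat \<Rightarrow> nat)) pmf" where
  "Dp A = pair_pmf (init A) (Pi_pmf (UNIV \<times> states A) 0 (\<lambda>(\<sigma>,q). trans A q \<sigma>))"

abbreviation Om :: "pwa \<Rightarrow> (nat \<Rightarrow> nat \<times> (letter \<times> nat \<Rightarrow> nat)) measure" where
  "Om A \<equiv> PiM UNIV (\<lambda>_. measure_pmf (Dp A))"

fun phi :: "(nat \<Rightarrow> letter) \<Rightarrow> (nat \<Rightarrow> nat \<times> (letter \<times> nat \<Rightarrow> nat)) \<Rightarrow> nat \<Rightarrow> nat" where
  "phi w Y 0 = fst (Y 0)"
| "phi w Y (Suc i) = snd (Y (Suc i)) (w i, phi w Y i)"

lemma UNIV_letter: "(UNIV :: letter set) = {La, Lb}"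
  using letter.exhaust by auto

lemma finite_letter[simp]: "finite (UNIV :: letter set)"
  by (simp add: UNIV_letter)

lemma prob_Om: "prob_space (Om A)"
  by (rule prob_space_PiM) (simp add: prob_space_measure_pmf)

lemma meas_coord[measurable]: "(\<lambda>Y. h (Y k)) \<in> measurable (Om A) (count_space UNIV)"
  by (rule measurable_compose[OF measurable_component_singleton]) auto

lemma meas_coord_borel[measurable]: "(\<lambda>Y. h (Y k)) \<in> borel_measurable (Om A)"
  by (rule measurable_compose[OF measurable_component_singleton]) auto

lemma meas_phi[measurable]: "(\<lambda>Y. phi w Y i) \<in> measurable (Om A) (count_space UNIV)"
proof (induction i)
  case 0 then show ?case by (simp add: meas_coord)
next
  case (Suc i)
  have "(\<lambda>Y. (\<lambda>j Y. snd (Y (Suc i)) (w i, j)) (phi w Y i) Y) \<in> measurable (Om A) (count_space UNIV)"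
    by (rule measurable_compose_countable[OF _ Suc]) (rule meas_coord)
  then show ?case by simp
qed

lemma meas_phi_run: "phi w \<in> measurable (Om A) run_space"
  unfolding run_space_def by (rule measurable_PiM_single') (auto simp: meas_phi)

lemma phi_cyl_iff:
  "(\<forall>i\<le>n. phi w Y i = r i) \<longleftrightarrow> fst (Y 0) = r 0 \<and> (\<forall>i<n. snd (Y (Suc i)) (w i, r i) = r (Suc i))"
proof (induction n)
  case 0 then show ?case by auto
next
  case (Suc n)
  have "(\<forall>i\<le>Suc n. phi w Y i = r i) \<longleftrightarrow> (\<forall>i\<le>n. phi w Y i = r i) \<and> phi w Y (Suc n) = r (Suc n)"
    using le_Suc_eq by auto
  also have "\<dots> \<longleftrightarrow> fst (Y 0) = r 0 \<and> (\<forall>i<n. snd (Y (Suc i)) (w i, r i) = r (Suc i)) \<and>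
      snd (Y (Suc n)) (w n, r n) = r (Suc n)"
    using Suc by auto
  also have "\<dots> \<longleftrightarrow> fst (Y 0) = r 0 \<and> (\<forall>i<Suc n. snd (Y (Suc i)) (w i, r i) = r (Suc i))"
    using less_Suc_eq by auto
  finally show ?case .
qed

definition Xs :: "(nat \<Rightarrow> letter) \<Rightarrow> (nat \<Rightarrow> nat) \<Rightarrow> nat \<Rightarrow> (nat \<times> (letter \<times> nat \<Rightarrow> nat)) set" where
  "Xs w r i = (case i of 0 \<Rightarrow> {d. fst d = r 0} | Suc j \<Rightarrow> {d. snd d (w j, r j) = r (Suc j)})"

lemma phi_cyl_emb:
  "(phi w) -` cyl n r \<inter> space (Om A) = prod_emb UNIV (\<lambda>_. measure_pmf (Dp A)) {..n} (PiE {..n} (Xs w r))"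
proof -
  have "(\<forall>i\<le>n. phi w Y i = r i) \<longleftrightarrow> (\<forall>i\<le>n. Y i \<in> Xs w r i)" for Y
    unfolding phi_cyl_iff Xs_def
    by (auto split: nat.splits)
  then show ?thesis
    by (auto simp: cyl_def prod_emb_def space_PiM PiE_iff)
qed

lemma emeasure_X0: "emeasure (measure_pmf (Dp A)) (Xs w r 0) = pmf (init A) (r 0)"
proof -
  have "Xs w r 0 = fst -` {r 0}" by (auto simp: Xs_def)
  then have "emeasure (measure_pmf (Dp A)) (Xs w r 0) = emeasure (measure_pmf (map_pmf fst (Dp A))) {r 0}"
    by simp
  then show ?thesis by (simp add: Dp_def map_fst_pair_pmf emeasure_pmf_single)
qed

definition tp :: "pwa \<Rightarrow> (nat \<Rightarrow> letter) \<Rightarrow> (nat \<Rightarrow> nat) \<Rightarrow> nat \<Rightarrow> real" where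
  "tp A w r j = (if r j \<in> states A then pmf (trans A (r j) (w j)) (r (Suc j)) else (if r (Suc j) = 0 then 1 else 0))"

lemma emeasure_XSuc: "finite (states A) \<Longrightarrow> emeasure (measure_pmf (Dp A)) (Xs w r (Suc j)) = tp A w r j"
proof -
  assume fin: "finite (states A)"
  have "Xs w r (Suc j) = (\<lambda>d. snd d (w j, r j)) -` {r (Suc j)}" by (auto simp: Xs_def)
  then have "emeasure (measure_pmf (Dp A)) (Xs w r (Suc j)) =
     emeasure (measure_pmf (map_pmf (\<lambda>f. f (w j, r j)) (map_pmf snd (Dp A)))) {r (Suc j)}"
    by (simp add: vimage_def)
  also have "map_pmf snd (Dp A) = Pi_pmf (UNIV \<times> states A) 0 (\<lambda>(\<sigma>,q). trans A q \<sigma>)"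
    by (simp add: Dp_def map_snd_pair_pmf)
  also have "map_pmf (\<lambda>f. f (w j, r j)) \<dots> = (if r j \<in> states A then trans A (r j) (w j) else return_pmf 0)"
    using fin by (subst Pi_pmf_component) auto
  finally show ?thesis by (auto simp: emeasure_pmf_single tp_def)
qed

lemma prefix_prob_Suc: "prefix_prob A w (Suc n) r = prefix_prob A w n r * pmf (trans A (r n) (w n)) (r (Suc n))"
  by (simp add: prefix_prob_def)

lemma prefix_prob_nz_states:
  assumes wf: "wf_pwa A" shows "prefix_prob A w n r \<noteq> 0 \<Longrightarrow> r n \<in> states A"
proof (induction n)
  case 0
  then have "pmf (init A) (r 0) \<noteq> 0" by (simp add: prefix_prob_def)
  then show ?case using wf by (auto simp: wf_pwa_def set_pmf_eq)
next
  case (Suc n)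
  then have a: "prefix_prob A w n r \<noteq> 0" and b: "pmf (trans A (r n) (w n)) (r (Suc n)) \<noteq> 0"
    by (auto simp: prefix_prob_Suc)
  then have "r n \<in> states A" using Suc by auto
  with b wf show ?case by (auto simp: wf_pwa_def set_pmf_eq)
qed

lemma prefix_prob_tp:
  assumes wf: "wf_pwa A"
  shows "pmf (init A) (r 0) * (\<Prod>j<n. tp A w r j) = prefix_prob A w n r"
proof (induction n)
  case 0 then show ?case by (simp add: prefix_prob_def)
next
  case (Suc n)
  show ?case
  proof (cases "r n \<in> states A")
    case True
    then show ?thesis using Suc by (simp add: prefix_prob_Suc tp_def mult.assoc[symmetric])
  next
    case False
    then have "prefix_prob A w n r = 0" using prefix_prob_nz_states[OF wf] by blast
    then show ?thesis using Suc by (simp add: prefix_prob_Suc mult.assoc[symmetric])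
  qed
qed

lemma tp_nonneg: "tp A w r j \<ge> 0" by (simp add: tp_def)

lemma emeasure_phi_cyl:
  assumes wf: "wf_pwa A"
  shows "emeasure (distr (Om A) run_space (phi w)) (cyl n r) = ennreal (prefix_prob A w n r)"
proof -
  have fin: "finite (states A)" using wf by (simp add: wf_pwa_def)
  have "emeasure (distr (Om A) run_space (phi w)) (cyl n r) = emeasure (Om A) (phi w -` cyl n r \<inter> space (Om A))"
    by (rule emeasure_distr[OF meas_phi_run cyl_sets])
  also have "\<dots> = (\<Prod>i\<le>n. emeasure (measure_pmf (Dp A)) (Xs w r i))"
    unfolding phi_cyl_emb by (rule emeasure_PiM_emb) (auto simp: prob_space_measure_pmf)
  also have "\<dots> = (\<Prod>i<Suc n. emeasure (measure_pmf (Dp A)) (Xs w r i))"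
    by (simp add: lessThan_Suc_atMost)
  also have "\<dots> = emeasure (measure_pmf (Dp A)) (Xs w r 0) * (\<Prod>j<n. emeasure (measure_pmf (Dp A)) (Xs w r (Suc j)))"
    by (rule prod.lessThan_Suc_shift)
  also have "\<dots> = ennreal (pmf (init A) (r 0)) * (\<Prod>j<n. ennreal (tp A w r j))"
    by (simp add: emeasure_X0 emeasure_XSuc[OF fin])
  also have "\<dots> = ennreal (pmf (init A) (r 0) * (\<Prod>j<n. tp A w r j))"
    by (simp add: prod_ennreal tp_nonneg ennreal_mult prod_nonneg)
  finally show ?thesis by (simp add: prefix_prob_tp[OF wf])
qed

lemma run_measure_eq:
  assumes wf: "wf_pwa A"
  shows "run_measure A w = distr (Om A) run_space (phi w)"
  unfolding run_measure_def
proof (rule the_equality)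
  let ?N = "distr (Om A) run_space (phi w)"
  have ps: "prob_space ?N" by (rule prob_space.prob_space_distr[OF prob_Om meas_phi_run])
  show "sets ?N = sets run_space \<and> prob_space ?N \<and>
    (\<forall>n r. emeasure ?N {x \<in> space run_space. \<forall>i\<le>n. x i = r i} = ennreal (prefix_prob A w n r))"
    using ps emeasure_phi_cyl[OF wf] by (simp add: cyl_def)
  fix M assume M: "sets M = sets run_space \<and> prob_space M \<and>
    (\<forall>n r. emeasure M {x \<in> space run_space. \<forall>i\<le>n. x i = r i} = ennreal (prefix_prob A w n r))"
  show "M = ?N"
  proof (rule runspace_eqI)
    show "finite_measure M" using M prob_space.finite_measure by blast
    show "emeasure M (cyl n r) = emeasure ?N (cyl n r)" for n r
      using M emeasure_phi_cyl[OF wf] by (simp add: cyl_def)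
  qed (use M in auto)
qed





definition good :: "pwa \<Rightarrow> (nat \<Rightarrow> nat \<times> (letter \<times> nat \<Rightarrow> nat)) \<Rightarrow> bool" where
  "good A Y \<longleftrightarrow> (\<forall>i. fst (Y i) \<in> set_pmf (init A) \<and> (\<forall>\<sigma> q. q \<in> states A \<longrightarrow> snd (Y i) (\<sigma>, q) \<in> set_pmf (trans A q \<sigma>)))"

lemma AE_good: assumes wf: "wf_pwa A" shows "AE Y in Om A. good A Y"
proof -
  have fin: "finite ((UNIV::letter set) \<times> states A)" using wf by (auto simp: wf_pwa_def intro!: finite_cartesian_product)
  have "AE Y in Om A. \<forall>i. Y i \<in> set_pmf (Dp A)"
    by (subst AE_all_countable) (auto intro!: AE_PiM_component simp: prob_space_measure_pmf AE_measure_pmf)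
  then show ?thesis
    by eventually_elim (simp add: good_def Dp_def set_Pi_pmf[OF fin] PiE_dflt_def mem_Times_iff)
qed

lemma good_phi_states: "wf_pwa A \<Longrightarrow> good A Y \<Longrightarrow> phi w Y i \<in> states A"
  by (induction i) (auto simp: good_def wf_pwa_def; blast)+

lemma good_is_run: "wf_pwa A \<Longrightarrow> good A Y \<Longrightarrow> is_run A w (phi w Y)"
  unfolding is_run_def using good_phi_states[of A Y w]
  by (auto simp: good_def pmf_positive)

lemma meas_wt_run[measurable]: "(\<lambda>r. real_of_rat (weights A w r i)) \<in> borel_measurable run_space"
proof -
  have c: "(\<lambda>r. r k) \<in> measurable run_space (count_space UNIV)" for k
    unfolding run_space_def by (rule measurable_component_singleton) auto
  have "(\<lambda>r. (\<lambda>j r. (\<lambda>j' r. real_of_rat (weight A j (w i) j')) (r (Suc i)) r) (r i) r) \<in> borel_measurable run_space"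
    by (rule measurable_compose_countable[OF _ c], rule measurable_compose_countable[OF _ c]) auto
  then show ?thesis by (simp add: weights_def)
qed

lemma meas_LimAvg[measurable]: "(\<lambda>r. LimAvg (weights A w r)) \<in> borel_measurable run_space"
  unfolding LimAvg_def of_rat_sum by measurable

lemma space_run_measure: "wf_pwa A \<Longrightarrow> space (run_measure A w) = UNIV"
  by (simp add: run_measure_eq)

lemma transfer_set:
  assumes wf: "wf_pwa A"
  shows "emeasure (run_measure A w) {r \<in> space (run_measure A w). LimAvg (weights A w r) \<ge> ereal \<eta>} =
    emeasure (Om A) {Y \<in> space (Om A). LimAvg (weights A w (phi w Y)) \<ge> ereal \<eta>}"
proof -
  have S: "{r \<in> space run_space. LimAvg (weights A w r) \<ge> ereal \<eta>} \<in> sets run_space" by measurable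
  show ?thesis
    unfolding run_measure_eq[OF wf] using emeasure_distr[OF meas_phi_run S, of A w]
    by (simp add: vimage_def Collect_conj_eq Int_commute)
qed

lemma run_measure_props:
  assumes wf: "wf_pwa A"
  shows "sets (run_measure A w) = sets run_space" "prob_space (run_measure A w)"
    "emeasure (run_measure A w) (cyl n r) = ennreal (prefix_prob A w n r)"
    "AE r in run_measure A w. is_run A w r"
proof -
  show "sets (run_measure A w) = sets run_space" by (simp add: run_measure_eq[OF wf])
  show "prob_space (run_measure A w)" unfolding run_measure_eq[OF wf]
    by (rule prob_space.prob_space_distr[OF prob_Om meas_phi_run])
  show "emeasure (run_measure A w) (cyl n r) = ennreal (prefix_prob A w n r)"
    by (simp add: run_measure_eq[OF wf] emeasure_phi_cyl[OF wf])
  have "AE Y in Om A. is_run A w (phi w Y)"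
    using AE_good[OF wf] by eventually_elim (rule good_is_run[OF wf])
  moreover have "Measurable.pred run_space (is_run A w)"
  proof -
    have c: "(\<lambda>r. r k) \<in> measurable run_space (count_space UNIV)" for k
      unfolding run_space_def by (rule measurable_component_singleton) auto
    have m: "(\<lambda>r. (\<lambda>j r. (\<lambda>j' r. pmf (trans A j (w i)) j') (r (Suc i)) r) (r i) r) \<in> borel_measurable run_space" for i
      by (rule measurable_compose_countable[OF _ c], rule measurable_compose_countable[OF _ c]) auto
    have m0: "(\<lambda>r. (\<lambda>j r. pmf (init A) j) (r 0) r) \<in> borel_measurable run_space"
      by (rule measurable_compose_countable[OF _ c]) auto
    show ?thesis unfolding is_run_def using m m0 by measurable
  qed
  ultimately show "AE r in run_measure A w. is_run A w r"
    unfolding run_measure_eq[OF wf] by (subst AE_distr_iff) (auto intro: meas_phi_run simp: Measurable.pred_def)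
qed




lemma sum_split_const:
  fixes u :: "nat \<Rightarrow> real"
  assumes "\<forall>i\<ge>N. u i = c" "N \<le> n"
  shows "(\<Sum>i<n. u i) = (\<Sum>i<N. u i) + real (n - N) * c"
proof -
  have "(\<Sum>i\<in>{0..<N}. u i) + (\<Sum>i\<in>{N..<n}. u i) = (\<Sum>i\<in>{0..<n}. u i)"
    by (rule sum.atLeastLessThan_concat) (use assms(2) in auto)
  then have "(\<Sum>i<n. u i) = (\<Sum>i\<in>{0..<N}. u i) + (\<Sum>i\<in>{N..<n}. u i)"
    by (simp add: atLeast0LessThan)
  also have "(\<Sum>i\<in>{N..<n}. u i) = (\<Sum>i\<in>{N..<n}. c)" using assms(1) by (intro sum.cong) auto
  finally show ?thesis by (simp add: atLeast0LessThan)
qed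

lemma LimAvg_eventually_const:
  assumes ev: "\<forall>i\<ge>N. v i = c"
  shows "LimAvg v = ereal (real_of_rat c)"
proof -
  define u where "u i = real_of_rat (v i)" for i
  define a where "a = (\<Sum>i<N. u i) - real N * real_of_rat c"
  have eq: "real_of_rat (\<Sum>i<n. v i) / real n = a / real n + real_of_rat c" if n: "n \<ge> Suc N" for n
  proof -
    have "real_of_rat (\<Sum>i<n. v i) = (\<Sum>i<n. u i)" by (simp add: u_def of_rat_sum)
    also have "\<dots> = (\<Sum>i<N. u i) + real (n - N) * real_of_rat c"
      using ev n by (intro sum_split_const) (auto simp: u_def)
    finally show ?thesis using n by (simp add: a_def field_simps of_nat_diff)
  qed
  have "(\<lambda>n. a / real n + real_of_rat c) \<longlonglongrightarrow> 0 + real_of_rat c"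
    by (intro tendsto_add lim_const_over_n tendsto_const)
  moreover have "eventually (\<lambda>n. a / real n + real_of_rat c = real_of_rat (\<Sum>i<n. v i) / real n) sequentially"
    using eq unfolding eventually_sequentially by (intro exI[of _ "Suc N"]) auto
  ultimately have "(\<lambda>n. real_of_rat (\<Sum>i<n. v i) / real n) \<longlonglongrightarrow> real_of_rat c"
    using Lim_transform_eventually by fastforce
  then have "(\<lambda>n. ereal (real_of_rat (\<Sum>i<n. v i) / real n)) \<longlonglongrightarrow> ereal (real_of_rat c)"
    by (rule tendsto_ereal)
  then show ?thesis unfolding LimAvg_def by (intro lim_imp_Liminf) auto
qed

lemma LimAvg_bounds:
  assumes "\<And>i. 0 \<le> v i \<and> v i \<le> 1"
  shows "0 \<le> LimAvg v \<and> LimAvg v \<le> 1"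
proof -
  have b: "0 \<le> real_of_rat (\<Sum>i<n. v i) / real n \<and> real_of_rat (\<Sum>i<n. v i) / real n \<le> 1" for n
  proof -
    have "0 \<le> (\<Sum>i<n. v i)" using assms by (auto intro: sum_nonneg)
    moreover have "(\<Sum>i<n. v i) \<le> (\<Sum>i<n. 1)" using assms by (intro sum_mono) auto
    ultimately have "0 \<le> real_of_rat (\<Sum>i<n. v i)" "real_of_rat (\<Sum>i<n. v i) \<le> real n"
      by (simp_all add: zero_le_of_rat_iff) (metis of_rat_less_eq of_rat_of_nat_eq)
    then show ?thesis by (cases "n = 0") (auto simp: field_simps)
  qed
  have "0 \<le> LimAvg v" unfolding LimAvg_def by (rule Liminf_bounded) (use b in auto)
  moreover have "LimAvg v \<le> 1"
  proof -
    have "LimAvg v \<le> Liminf sequentially (\<lambda>n. (1::ereal))"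
      unfolding LimAvg_def by (rule Liminf_mono) (use b in auto)
    then show ?thesis using Liminf_const[of sequentially "1::ereal"] by simp
  qed
  ultimately show ?thesis by simp
qed

definition autB :: pwa where
  "autB = \<lparr>states = {0,1,2}, init = return_pmf 0,
     trans = (\<lambda>q \<sigma>. if q = 0 then pmf_of_set {0,1} else if q = 1 \<and> \<sigma> = Lb then return_pmf 1 else return_pmf 2),
     weight = (\<lambda>q \<sigma> q'. if q = 1 \<and> \<sigma> = Lb \<and> q' = 1 then 1 else 0)\<rparr>"

lemma pmf_coin: "pmf (pmf_of_set {0::nat,1}) x = (if x \<in> {0,1} then 1/2 else 0)"
  by (simp add: pmf_of_set)

lemma wf_autB: "wf_pwa autB"
  by (auto simp: wf_pwa_def autB_def)

lemma autB_simps: "init autB = return_pmf 0" "states autB = {0,1,2}"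
  "trans autB q \<sigma> = (if q = 0 then pmf_of_set {0,1} else if q = 1 \<and> \<sigma> = Lb then return_pmf 1 else return_pmf 2)"
  "weight autB q \<sigma> q' = (if q = 1 \<and> \<sigma> = Lb \<and> q' = 1 then 1 else 0)"
  by (simp_all add: autB_def)

lemma weightsB: "weights autB w r i = (if r i = 1 \<and> w i = Lb \<and> r (Suc i) = 1 then 1 else 0)"
  by (simp add: weights_def autB_simps)

lemma weightsB_bounds: "0 \<le> weights autB w r i \<and> weights autB w r i \<le> 1"
  by (simp add: weightsB)

lemma LimAvgB_bounds: "0 \<le> LimAvg (weights autB w r) \<and> LimAvg (weights autB w r) \<le> 1"
  by (rule LimAvg_bounds) (rule weightsB_bounds)

lemma runB:
  assumes "is_run autB w r"
  shows "r 0 = 0" "r i = 0 \<Longrightarrow> r (Suc i) \<in> {0,1}"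
    "r i = 1 \<Longrightarrow> r (Suc i) = (if w i = Lb then 1 else 2)"
    "r i \<notin> {0,1} \<Longrightarrow> r (Suc i) = 2"
proof -
  have p0: "pmf (init autB) (r 0) > 0" and ps: "pmf (trans autB (r i) (w i)) (r (Suc i)) > 0" for i
    using assms by (auto simp: is_run_def)
  show "r 0 = 0" using p0 by (auto simp: autB_simps pmf_return indicator_def split: if_splits)
  show "r i = 0 \<Longrightarrow> r (Suc i) \<in> {0,1}" using ps[of i] by (auto simp: autB_simps pmf_coin indicator_def split: if_splits)
  show "r i = 1 \<Longrightarrow> r (Suc i) = (if w i = Lb then 1 else 2)"
    using ps[of i] by (auto simp: autB_simps pmf_return indicator_def pmf_coin split: if_splits)
  show "r i \<notin> {0,1} \<Longrightarrow> r (Suc i) = 2"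
    using ps[of i] by (auto simp: autB_simps pmf_return indicator_def pmf_coin split: if_splits)
qed

lemma runB_nz: "is_run autB w r \<Longrightarrow> r i \<noteq> 0 \<Longrightarrow> r (Suc i) \<noteq> 0"
  using runB(3,4)[of w r i] by (cases "r i = 1") auto

lemma runB_two: "is_run autB w r \<Longrightarrow> r i = 2 \<Longrightarrow> k \<ge> i \<Longrightarrow> r k = 2"
proof (induction k)
  case 0 then show ?case by simp
next
  case (Suc k)
  then show ?case using runB(4)[of w r k] by (cases "Suc k = i") (auto simp: le_Suc_eq)
qed

lemma runB_inf:
  assumes r: "is_run autB w r" and inf: "infinite {i. w i = La}"
  shows "LimAvg (weights autB w r) = 0"
proof (cases "\<forall>k. r k = 0")
  case True
  then have "\<forall>i\<ge>0. weights autB w r i = 0" by (simp add: weightsB)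
  then have "LimAvg (weights autB w r) = ereal (real_of_rat 0)" by (rule LimAvg_eventually_const)
  then show ?thesis by (simp add: zero_ereal_def)
next
  case False
  then obtain k0 where k0: "r k0 \<noteq> 0" by auto
  obtain j where j: "j \<ge> k0" "w j = La" using inf unfolding infinite_nat_iff_unbounded_le by auto
  have nz: "r k \<noteq> 0" if "k \<ge> k0" for k using that
  proof (induction k)
    case 0 then show ?case using k0 by simp
  next
    case (Suc k) then show ?case using runB_nz[OF r, of k] k0 by (cases "Suc k = k0") (auto simp: le_Suc_eq)
  qed
  have "r (Suc j) = 2"
    using runB(3,4)[OF r, of j] nz[OF j(1)] j(2) by (cases "r j = 1") auto
  then have "\<forall>i\<ge>Suc j. weights autB w r i = 0"
    using runB_two[OF r] by (auto simp: weightsB)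
  then have "LimAvg (weights autB w r) = ereal (real_of_rat 0)" by (rule LimAvg_eventually_const)
  then show ?thesis by (simp add: zero_ereal_def)
qed

lemma finite_a_K: "finite {i. w i = La} \<Longrightarrow> \<exists>K. \<forall>i>K. (w :: nat \<Rightarrow> letter) i = Lb"
proof -
  assume "finite {i. w i = La}"
  then obtain K where K: "{i. w i = La} \<subseteq> {..K}" using finite_nat_iff_bounded_le[THEN iffD1] by meson
  have "\<forall>i>K. w i = Lb"
  proof (intro allI impI)
    fix i assume "i > K"
    then have "w i \<noteq> La" using K by auto
    then show "w i = Lb" using letter.exhaust by blast
  qed
  then show ?thesis by blast
qed

definition rhoK :: "nat \<Rightarrow> nat \<Rightarrow> nat" where "rhoK K i = (if i \<le> K then 0 else 1)"

lemma rhoK_run: assumes K: "\<forall>i>K. w i = Lb" shows "is_run autB w (rhoK K)"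
  unfolding is_run_def
proof (intro conjI allI)
  show "0 < pmf (init autB) (rhoK K 0)" by (simp add: rhoK_def autB_simps)
  fix i
  show "0 < pmf (trans autB (rhoK K i) (w i)) (rhoK K (Suc i))"
  proof (cases "i \<le> K")
    case True
    then have "rhoK K i = 0" "rhoK K (Suc i) \<in> {0,1}" by (auto simp: rhoK_def)
    then show ?thesis by (simp only: autB_simps pmf_coin if_True) simp
  next
    case False
    then have "rhoK K i = 1" "rhoK K (Suc i) = 1" "w i = Lb" using K by (auto simp: rhoK_def)
    then show ?thesis by (simp add: autB_simps)
  qed
qed

lemma runB_after_K:
  assumes r: "is_run autB w r" and K: "\<forall>i>K. w i = Lb" and rK: "r (Suc K) = 1"
  shows "i \<ge> Suc K \<Longrightarrow> r i = 1"
proof (induction i)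
  case 0 then show ?case by simp
next
  case (Suc i) then show ?case using rK runB(3)[OF r, of i] K by (cases "Suc i = Suc K") (auto simp: le_Suc_eq)
qed

lemma runB_fin_LimAvg:
  assumes r: "is_run autB w r" and K: "\<forall>i>K. w i = Lb" and rK: "r (Suc K) = 1"
  shows "LimAvg (weights autB w r) = 1"
proof -
  have "\<forall>i\<ge>Suc K. weights autB w r i = 1"
    using runB_after_K[OF r K rK] K by (auto simp: weightsB)
  then have "LimAvg (weights autB w r) = ereal (real_of_rat 1)" by (rule LimAvg_eventually_const)
  then show ?thesis by (simp add: one_ereal_def)
qed

theorem part1: "\<forall>w. L_max autB w = ereal (L_F w)"
proof
  fix w
  show "L_max autB w = ereal (L_F w)"
  proof (cases "infinite {i. w i = La}")
    case True
    have r0: "is_run autB w (\<lambda>_. 0)" by (simp add: is_run_def autB_simps pmf_coin)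
    have "{LimAvg (weights autB w r) | r. is_run autB w r} = {0}"
    proof (intro set_eqI iffI)
      fix x assume "x \<in> {LimAvg (weights autB w r) | r. is_run autB w r}"
      then show "x \<in> {0}" using runB_inf[OF _ True] by auto
    next
      fix x assume "x \<in> {0::ereal}"
      then show "x \<in> {LimAvg (weights autB w r) | r. is_run autB w r}"
        using runB_inf[OF r0 True] r0 by auto
    qed
    then show ?thesis using True by (simp add: L_max_def L_F_def)
  next
    case False
    then obtain K where K: "\<forall>i>K. w i = Lb" using finite_a_K by blast
    have S: "1 \<in> {LimAvg (weights autB w r) | r. is_run autB w r}"
      using rhoK_run[OF K] runB_fin_LimAvg[OF rhoK_run[OF K] K] by (force simp: rhoK_def)
    have le: "Sup {LimAvg (weights autB w r) | r. is_run autB w r} \<le> 1"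
      by (rule Sup_least) (use LimAvgB_bounds in auto)
    have ge: "1 \<le> Sup {LimAvg (weights autB w r) | r. is_run autB w r}"
      by (rule Sup_upper[OF S])
    have "L_max autB w = 1"
      unfolding L_max_def using le ge by (rule antisym)
    then show ?thesis using False by (simp add: L_F_def)
  qed
qed




lemma Sup_ereal_atMost: "Sup (ereal ` {\<eta>::real. \<eta> \<le> c}) = ereal c"
proof (rule antisym)
  show "Sup (ereal ` {\<eta>. \<eta> \<le> c}) \<le> ereal c" by (rule Sup_least) auto
  show "ereal c \<le> Sup (ereal ` {\<eta>. \<eta> \<le> c})" by (rule Sup_upper) auto
qed

lemma is_run_prefix_pos: "is_run A w r \<Longrightarrow> prefix_prob A w n r > 0"
  unfolding prefix_prob_def is_run_def by (auto intro!: mult_pos_pos prod_pos)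

theorem part2: "\<forall>w. L_pos autB w = ereal (L_F w)"
proof
  fix w
  let ?M = "run_measure autB w"
  define E where "E \<eta> = {r \<in> space ?M. LimAvg (weights autB w r) \<ge> ereal \<eta>}" for \<eta>
  note props = run_measure_props[OF wf_autB, of w]
  interpret prob_space ?M by (rule props(2))
  have spM: "space ?M = UNIV" by (rule space_run_measure[OF wf_autB])
  have Esets: "E \<eta> \<in> sets ?M" for \<eta>
  proof -
    have "{r \<in> space run_space. LimAvg (weights autB w r) \<ge> ereal \<eta>} \<in> sets run_space" by measurable
    then show ?thesis using props(1) spM by (simp add: E_def)
  qed
  have LP: "L_pos autB w = Sup (ereal ` {\<eta>. emeasure ?M (E \<eta>) > 0})" by (simp add: L_pos_def E_def)
  show "L_pos autB w = ereal (L_F w)"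
  proof (cases "infinite {i. w i = La}")
    case True
    have "{\<eta>. emeasure ?M (E \<eta>) > 0} = {\<eta>. \<eta> \<le> 0}"
    proof (intro set_eqI iffI; simp)
      fix \<eta> :: real assume pos: "emeasure ?M (E \<eta>) > 0"
      show "\<eta> \<le> 0"
      proof (rule ccontr)
        assume neg: "\<not> \<eta> \<le> 0"
        have "AE r in ?M. r \<in> E \<eta> \<longrightarrow> r \<in> {}"
          using props(4) by eventually_elim (use neg in \<open>auto simp: E_def runB_inf[OF _ True]\<close>)
        then have "emeasure ?M (E \<eta>) \<le> emeasure ?M {}" by (rule emeasure_mono_AE) simp
        then show False using pos by simp
      qed
    next
      fix \<eta> :: real assume "\<eta> \<le> 0"
      then have "E \<eta> = space ?M" using LimAvgB_bounds[of w]
        by (auto simp: E_def intro: order_trans[of _ 0])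
      then show "emeasure ?M (E \<eta>) > 0" by (simp add: emeasure_space_1)
    qed
    then show ?thesis using True by (simp add: LP Sup_ereal_atMost L_F_def)
  next
    case False
    then obtain K where K: "\<forall>i>K. w i = Lb" using finite_a_K by blast
    have "{\<eta>. emeasure ?M (E \<eta>) > 0} = {\<eta>. \<eta> \<le> 1}"
    proof (intro set_eqI iffI; simp)
      fix \<eta> :: real assume pos: "emeasure ?M (E \<eta>) > 0"
      show "\<eta> \<le> 1"
      proof (rule ccontr)
        assume "\<not> \<eta> \<le> 1"
        then have "E \<eta> = {}" using LimAvgB_bounds[of w]
          by (auto simp: E_def) (metis ereal_less_eq(3) less_eq_ereal_def linorder_not_le one_ereal_def order_trans)
        then show False using pos by simp
      qed
    next
      fix \<eta> :: real assume eta: "\<eta> \<le> 1"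
      have "AE r in ?M. r \<in> cyl (Suc K) (rhoK K) \<longrightarrow> r \<in> E \<eta>"
        using props(4)
      proof eventually_elim
        case (elim r)
        show ?case
        proof
          assume "r \<in> cyl (Suc K) (rhoK K)"
          then have "r (Suc K) = 1" by (simp add: cyl_def rhoK_def)
          then have "LimAvg (weights autB w r) = 1" by (rule runB_fin_LimAvg[OF elim K])
          then show "r \<in> E \<eta>" using eta spM by (simp add: E_def one_ereal_def)
        qed
      qed
      then have "emeasure ?M (cyl (Suc K) (rhoK K)) \<le> emeasure ?M (E \<eta>)"
        by (rule emeasure_mono_AE) (rule Esets)
      moreover have "emeasure ?M (cyl (Suc K) (rhoK K)) > 0"
        using props(3) is_run_prefix_pos[OF rhoK_run[OF K]] by simp
      ultimately show "emeasure ?M (E \<eta>) > 0" by simp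
    qed
    then show ?thesis using False by (simp add: LP Sup_ereal_atMost L_F_def)
  qed
qed




fun psi :: "nat \<Rightarrow> (nat \<Rightarrow> nat \<times> (letter \<times> nat \<Rightarrow> nat)) \<Rightarrow> nat \<Rightarrow> nat" where
  "psi q Z 0 = q"
| "psi q Z (Suc j) = snd (Z j) (Lb, psi q Z j)"

definition wt :: "pwa \<Rightarrow> nat \<Rightarrow> letter \<Rightarrow> nat \<Rightarrow> real" where
  "wt A q \<sigma> q' = real_of_rat (weight A q \<sigma> q')"

definition TT :: "pwa \<Rightarrow> nat \<Rightarrow> (nat \<Rightarrow> nat \<times> (letter \<times> nat \<Rightarrow> nat)) \<Rightarrow> nat \<Rightarrow> real" where
  "TT A q Z m = (\<Sum>j<m. wt A (psi q Z j) Lb (psi q Z (Suc j)))"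

definition shiftY :: "nat \<Rightarrow> (nat \<Rightarrow> 'b) \<Rightarrow> (nat \<Rightarrow> 'b)" where
  "shiftY L Y = (\<lambda>j. Y (j + Suc L))"

definition SS :: "pwa \<Rightarrow> (nat \<Rightarrow> letter) \<Rightarrow> (nat \<Rightarrow> nat \<times> (letter \<times> nat \<Rightarrow> nat)) \<Rightarrow> nat \<Rightarrow> real" where
  "SS A w Y n = (\<Sum>i<n. wt A (phi w Y i) (w i) (phi w Y (Suc i)))"

lemma LimAvg_SS: "LimAvg (weights A w (phi w Y)) = liminf (\<lambda>n. ereal (SS A w Y n / real n))"
  by (simp add: LimAvg_def SS_def weights_def wt_def of_rat_sum)

lemma phi_tail:
  assumes "\<forall>j<m. v (L + j) = Lb" "j \<le> m"
  shows "phi v Y (L + j) = psi (phi v Y L) (shiftY L Y) j"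
  using assms(2)
proof (induction j)
  case 0 then show ?case by simp
next
  case (Suc j)
  then have "v (L + j) = Lb" using assms(1) by auto
  then show ?case using Suc by (simp add: shiftY_def add.commute)
qed

lemma SS_tail:
  assumes "\<forall>j<m. v (L + j) = Lb"
  shows "SS A v Y (L + m) = SS A v Y L + TT A (phi v Y L) (shiftY L Y) m"
  using assms
proof (induction m)
  case 0 then show ?case by (simp add: TT_def)
next
  case (Suc m)
  have IH: "SS A v Y (L + m) = SS A v Y L + TT A (phi v Y L) (shiftY L Y) m" using Suc by auto
  have l: "v (L + m) = Lb" using Suc.prems by auto
  have "SS A v Y (L + Suc m) = SS A v Y (L + m) + wt A (phi v Y (L + m)) (v (L + m)) (phi v Y (Suc (L + m)))"
    by (simp add: SS_def)
  also have "phi v Y (L + m) = psi (phi v Y L) (shiftY L Y) m"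
    using phi_tail[OF Suc.prems, of m] by simp
  also have "phi v Y (Suc (L + m)) = psi (phi v Y L) (shiftY L Y) (Suc m)"
    using phi_tail[OF Suc.prems, of "Suc m"] by simp
  finally show ?case using IH l by (simp add: TT_def)
qed

lemma phi_local: "(\<forall>i\<le>L. Y i = Y' i) \<Longrightarrow> k \<le> L \<Longrightarrow> phi v Y k = phi v Y' k"
  by (induction k) auto

lemma phi_word_local: "(\<forall>i<L. v i = v' i) \<Longrightarrow> k \<le> L \<Longrightarrow> phi v Y k = phi v' Y k"
  by (induction k) auto

lemma space_Om[simp]: "space (Om A) = UNIV"
  by (simp add: space_PiM)

lemma meas_shift[measurable]: "shiftY L \<in> measurable (Om A) (Om A)"
  unfolding shiftY_def by (rule measurable_PiM_single') (auto intro: measurable_component_singleton)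

lemma meas_psi[measurable]: "(\<lambda>Z. psi q Z j) \<in> measurable (Om A) (count_space UNIV)"
proof (induction j)
  case 0 then show ?case by simp
next
  case (Suc j)
  have "(\<lambda>Z. (\<lambda>k Z. snd (Z j) (Lb, k)) (psi q Z j) Z) \<in> measurable (Om A) (count_space UNIV)"
    by (rule measurable_compose_countable[OF _ Suc]) (rule meas_coord)
  then show ?case by simp
qed

lemma meas_wt2: "(\<lambda>Z. wt A (f Z) \<sigma> (g Z)) \<in> borel_measurable M"
  if f: "f \<in> measurable M (count_space UNIV)" and g: "g \<in> measurable M (count_space UNIV)"
proof -
  have "(\<lambda>Z. (\<lambda>j Z. (\<lambda>j' Z. wt A j \<sigma> j') (g Z) Z) (f Z) Z) \<in> borel_measurable M"
    by (rule measurable_compose_countable[OF _ f], rule measurable_compose_countable[OF _ g]) auto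
  then show ?thesis by simp
qed

lemma meas_TT[measurable]: "(\<lambda>Z. TT A q Z m) \<in> borel_measurable (Om A)"
  unfolding TT_def by (intro borel_measurable_sum meas_wt2 meas_psi)

lemma meas_TT_shift_phi: "(\<lambda>Y. TT A (phi v Y L) (shiftY L Y) m) \<in> borel_measurable (Om A)"
proof -
  have "(\<lambda>Y. (\<lambda>q Y. TT A q (shiftY L Y) m) (phi v Y L) Y) \<in> borel_measurable (Om A)"
    by (rule measurable_compose_countable[OF _ meas_phi]) (rule measurable_compose[OF meas_shift meas_TT])
  then show ?thesis by simp
qed

lemma meas_LimAvg_Om[measurable]: "(\<lambda>Y. LimAvg (weights A w (phi w Y))) \<in> borel_measurable (Om A)"
  by (rule measurable_compose[OF meas_phi_run meas_LimAvg])

lemma indep_shift: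
  assumes C: "C \<in> sets (Om A)" and E: "E \<in> sets (Om A)"
  and dep: "\<And>\<omega> \<omega>'. comb_seq (Suc L) \<omega> \<omega>' \<in> C \<longleftrightarrow> \<omega> \<in> C"
  shows "emeasure (Om A) {Y \<in> space (Om A). Y \<in> C \<and> shiftY L Y \<in> E} = emeasure (Om A) C * emeasure (Om A) E"
proof -
  interpret sequence_space "measure_pmf (Dp A)"
    by unfold_locales (simp add: prob_space_measure_pmf)
  let ?f = "\<lambda>(\<omega>, \<omega>'). comb_seq (Suc L) \<omega> \<omega>'"
  have X: "{Y \<in> space (Om A). Y \<in> C \<and> shiftY L Y \<in> E} \<in> sets (Om A)"
    using C E by measurable
  have sh: "shiftY L (comb_seq (Suc L) \<omega> \<omega>') = \<omega>'" for \<omega> \<omega>' :: "nat \<Rightarrow> nat \<times> (letter \<times> nat \<Rightarrow> nat)"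
    by (simp add: shiftY_def comb_seq_add fun_eq_iff del: add_Suc_right)
  have pre: "?f -` {Y \<in> space (Om A). Y \<in> C \<and> shiftY L Y \<in> E} \<inter> space (Om A \<Otimes>\<^sub>M Om A) = C \<times> E"
    by (auto simp: space_pair_measure sh dep)
  have "emeasure (Om A) {Y \<in> space (Om A). Y \<in> C \<and> shiftY L Y \<in> E} =
      emeasure (distr (Om A \<Otimes>\<^sub>M Om A) (Om A) ?f) {Y \<in> space (Om A). Y \<in> C \<and> shiftY L Y \<in> E}"
    by (simp add: PiM_comb_seq)
  also have "\<dots> = emeasure (Om A \<Otimes>\<^sub>M Om A) (?f -` {Y \<in> space (Om A). Y \<in> C \<and> shiftY L Y \<in> E} \<inter> space (Om A \<Otimes>\<^sub>M Om A))"
    by (rule emeasure_distr[OF measurable_comb_seq X])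
  also have "\<dots> = emeasure (Om A \<Otimes>\<^sub>M Om A) (C \<times> E)"
    by (simp only: pre)
  also have "\<dots> = emeasure (Om A) C * emeasure (Om A) E"
    by (rule P.emeasure_pair_measure_Times[OF C E])
  finally show ?thesis .
qed

lemma shift_invariant:
  assumes E: "E \<in> sets (Om A)"
  shows "emeasure (Om A) {Y \<in> space (Om A). shiftY L Y \<in> E} = emeasure (Om A) E"
proof -
  interpret prob_space "Om A" by (rule prob_Om)
  have "emeasure (Om A) {Y \<in> space (Om A). Y \<in> space (Om A) \<and> shiftY L Y \<in> E} = emeasure (Om A) (space (Om A)) * emeasure (Om A) E"
    by (rule indep_shift[OF sets.top E]) simp
  moreover have "emeasure (Om A) UNIV = 1" using emeasure_space_1 by simp
  ultimately show ?thesis by simp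
qed




definition BB :: "pwa \<Rightarrow> nat \<Rightarrow> nat \<Rightarrow> (nat \<Rightarrow> nat \<times> (letter \<times> nat \<Rightarrow> nat)) set" where
  "BB A q N = {Z \<in> space (Om A). \<exists>m\<ge>N. TT A q Z m \<le> 3/8 * real m}"

definition RR :: "pwa \<Rightarrow> nat set" where
  "RR A = {q. \<exists>v L. (\<forall>i\<ge>L. v i = Lb) \<and> emeasure (Om A) {Y \<in> space (Om A). phi v Y L = q} > 0}"

lemma BB_sets[measurable]: "BB A q N \<in> sets (Om A)"
  unfolding BB_def by measurable

lemma BB_mono: "N \<le> N' \<Longrightarrow> BB A q N' \<subseteq> BB A q N"
  unfolding BB_def using le_trans by blast

lemma Cq_sets[measurable]: "{Y \<in> space (Om A). phi v Y L = q} \<in> sets (Om A)"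
  by measurable

lemma L_as_half:
  assumes wf: "wf_pwa A" and Las: "L_as A v = 1"
  shows "AE Y in Om A. LimAvg (weights A v (phi v Y)) \<ge> ereal (1/2)"
proof -
  interpret prob_space "Om A" by (rule prob_Om)
  define Sset where "Sset = {\<eta>::real. emeasure (run_measure A v)
      {r \<in> space (run_measure A v). LimAvg (weights A v r) \<ge> ereal \<eta>} = 1}"
  have "ereal (1/2) < Sup (ereal ` Sset)" using Las by (simp add: L_as_def Sset_def)
  then obtain x where x: "x \<in> ereal ` Sset" "ereal (1/2) < x" unfolding less_Sup_iff by blast
  then obtain \<eta> where eta0: "\<eta> \<in> Sset" "x = ereal \<eta>" by blast
  then have eta: "\<eta> \<in> Sset" "1/2 < \<eta>" using x(2) by auto
  have "emeasure (Om A) {Y \<in> space (Om A). LimAvg (weights A v (phi v Y)) \<ge> ereal \<eta>} = 1"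
    using eta(1) transfer_set[OF wf, of v \<eta>] by (simp add: Sset_def)
  then have "AE Y in Om A. LimAvg (weights A v (phi v Y)) \<ge> ereal \<eta>"
    by (subst AE_iff_emeasure_eq_1) auto
  then show ?thesis
    by eventually_elim (use eta(2) in \<open>auto intro: order_trans[rotated]\<close>)
qed

lemma finite_a_prefix: "\<forall>i\<ge>L. v i = Lb \<Longrightarrow> L_F v = 1"
proof -
  assume "\<forall>i\<ge>L. v i = Lb"
  then have "{i. v i = La} \<subseteq> {..<L}" by (auto simp: not_less[symmetric])
  then have "finite {i. v i = La}" using finite_subset by blast
  then show ?thesis by (simp add: L_F_def)
qed

lemma tail_null:
  assumes wf: "wf_pwa A" and H: "\<forall>w. L_as A w = ereal (L_F w)"
    and v: "\<forall>i\<ge>L. v i = Lb"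
    and pos: "emeasure (Om A) {Y \<in> space (Om A). phi v Y L = q} > 0"
  shows "emeasure (Om A) (\<Inter>N. BB A q N) = 0"
proof -
  have Las: "L_as A v = 1" using H finite_a_prefix[OF v] by simp
  have vL: "\<forall>j<m. v (L + j) = Lb" for m using v by auto
  define Cq where "Cq = {Y \<in> space (Om A). phi v Y L = q}"
  have AEt: "AE Y in Om A. Y \<in> {Y \<in> space (Om A). Y \<in> Cq \<and> shiftY L Y \<in> (\<Inter>N. BB A q N)} \<longrightarrow> Y \<in> {}"
    using L_as_half[OF wf Las]
  proof eventually_elim
    case (elim Y)
    have "ereal (7/16) < liminf (\<lambda>n. ereal (SS A v Y n / real n))"
      using elim by (simp add: LimAvg_SS) (rule less_le_trans[rotated], assumption, simp)
    then have "eventually (\<lambda>n. ereal (7/16) < ereal (SS A v Y n / real n)) sequentially"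
      by (rule less_LiminfD)
    then obtain N0 where N0: "\<And>n. n \<ge> N0 \<Longrightarrow> 7/16 < SS A v Y n / real n"
      by (auto simp: eventually_sequentially)
    define a where "a = \<bar>SS A v Y L\<bar>"
    define N1 where "N1 = max (Suc N0) (nat \<lceil>16 * a\<rceil> + 1)"
    have "shiftY L Y \<notin> BB A q N1" if "phi v Y L = q"
    proof
      assume "shiftY L Y \<in> BB A q N1"
      then obtain m where m: "m \<ge> N1" "TT A q (shiftY L Y) m \<le> 3/8 * real m" by (auto simp: BB_def)
      have n0: "L + m \<ge> N0" "L + m > 0" using m(1) by (auto simp: N1_def)
      have "7/16 < SS A v Y (L + m) / real (L + m)" using N0[OF n0(1)] .
      then have "7/16 * real (L + m) < SS A v Y (L + m)" using n0(2) by (simp add: field_simps)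
      moreover have "SS A v Y (L + m) = SS A v Y L + TT A q (shiftY L Y) m"
        using SS_tail[OF vL, of A Y m] that by simp
      moreover have "real m \<ge> 16 * a + 1"
      proof -
        have "real m \<ge> real (nat \<lceil>16 * a\<rceil> + 1)" using m(1) by (simp add: N1_def)
        moreover have "real (nat \<lceil>16 * a\<rceil>) \<ge> 16 * a" by linarith
        ultimately show ?thesis by simp
      qed
      moreover have "SS A v Y L \<le> a" by (simp add: a_def)
      ultimately show False using m(2) by simp
    qed
    then show ?case by (auto simp: Cq_def)
  qed
  have E: "(\<Inter>N. BB A q N) \<in> sets (Om A)" by measurable
  have Csets: "Cq \<in> sets (Om A)" unfolding Cq_def by (rule Cq_sets)
  have "emeasure (Om A) {Y \<in> space (Om A). Y \<in> Cq \<and> shiftY L Y \<in> (\<Inter>N. BB A q N)} \<le> emeasure (Om A) {}"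
    by (rule emeasure_mono_AE[OF AEt]) simp
  then have z: "emeasure (Om A) {Y \<in> space (Om A). Y \<in> Cq \<and> shiftY L Y \<in> (\<Inter>N. BB A q N)} = 0" by simp
  have dep: "comb_seq (Suc L) \<omega> \<omega>' \<in> Cq \<longleftrightarrow> \<omega> \<in> Cq" for \<omega> \<omega>'
  proof -
    have "phi v (comb_seq (Suc L) \<omega> \<omega>') L = phi v \<omega> L"
      by (rule phi_local[of L]) (auto simp: comb_seq_less)
    then show ?thesis by (simp add: Cq_def)
  qed
  have "emeasure (Om A) Cq * emeasure (Om A) (\<Inter>N. BB A q N) = 0"
    using indep_shift[OF Csets E dep] z by simp
  moreover have "emeasure (Om A) Cq \<noteq> 0" using pos by (simp add: Cq_def)
  ultimately show ?thesis by simp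
qed

lemma small_BB:
  assumes wf: "wf_pwa A" and H: "\<forall>w. L_as A w = ereal (L_F w)"
    and q: "q \<in> RR A" and eps: "(0::ennreal) < \<epsilon>"
  shows "\<exists>N. emeasure (Om A) (BB A q N) < \<epsilon>"
proof -
  interpret prob_space "Om A" by (rule prob_Om)
  obtain v L where v: "\<forall>i\<ge>L. v i = Lb" and pos: "emeasure (Om A) {Y \<in> space (Om A). phi v Y L = q} > 0"
    using q by (auto simp: RR_def)
  have "(INF N. emeasure (Om A) (BB A q N)) = emeasure (Om A) (\<Inter>N. BB A q N)"
    by (rule INF_emeasure_decseq) (auto simp: decseq_def BB_mono)
  also have "\<dots> = 0" by (rule tail_null[OF wf H v pos])
  finally have "(INF N. emeasure (Om A) (BB A q N)) < \<epsilon>" using eps by simp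
  then show ?thesis by (auto simp: INF_less_iff)
qed

lemma RR_states:
  assumes wf: "wf_pwa A" shows "RR A \<subseteq> states A"
proof
  fix q assume "q \<in> RR A"
  then obtain v L where pos: "emeasure (Om A) {Y \<in> space (Om A). phi v Y L = q} > 0"
    by (auto simp: RR_def)
  show "q \<in> states A"
  proof (rule ccontr)
    assume nq: "q \<notin> states A"
    have "AE Y in Om A. Y \<in> {Y \<in> space (Om A). phi v Y L = q} \<longrightarrow> Y \<in> {}"
      using AE_good[OF wf] by eventually_elim (use nq good_phi_states[OF wf] in auto)
    then have "emeasure (Om A) {Y \<in> space (Om A). phi v Y L = q} \<le> emeasure (Om A) {}"
      by (rule emeasure_mono_AE) simp
    then show False using pos by simp
  qed
qed

lemma finite_RR: assumes wf: "wf_pwa A" shows "finite (RR A)"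
proof -
  have "RR A \<subseteq> states A" by (rule RR_states[OF wf])
  moreover have "finite (states A)" using wf by (simp add: wf_pwa_def)
  ultimately show ?thesis by (rule finite_subset)
qed

lemma uniform_N:
  assumes wf: "wf_pwa A" and H: "\<forall>w. L_as A w = ereal (L_F w)"
  shows "\<exists>Nf. \<forall>k. \<forall>q\<in>RR A. emeasure (Om A) (BB A q (Nf k)) \<le> ennreal ((1/2)^k)"
proof -
  have "\<exists>N. \<forall>q\<in>RR A. emeasure (Om A) (BB A q N) \<le> ennreal ((1/2)^k)" for k
  proof -
    have "\<forall>q\<in>RR A. \<exists>N. emeasure (Om A) (BB A q N) < ennreal ((1/2)^k)"
      using small_BB[OF wf H] by simp
    then obtain f where f: "\<forall>q\<in>RR A. emeasure (Om A) (BB A q (f q)) < ennreal ((1/2)^k)"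
      by (metis (no_types) bchoice)
    define N where "N = Max (insert 0 (f ` RR A))"
    have fN: "f q \<le> N" if "q \<in> RR A" for q
      using that finite_RR[OF wf] by (auto simp: N_def)
    have "\<forall>q\<in>RR A. emeasure (Om A) (BB A q N) \<le> ennreal ((1/2)^k)"
    proof
      fix q assume q: "q \<in> RR A"
      have "emeasure (Om A) (BB A q N) \<le> emeasure (Om A) (BB A q (f q))"
        by (rule emeasure_mono[OF BB_mono[OF fN[OF q]] BB_sets])
      also have "\<dots> \<le> ennreal ((1/2)^k)" using f q by (simp add: less_imp_le)
      finally show "emeasure (Om A) (BB A q N) \<le> ennreal ((1/2)^k)" .
    qed
    then show ?thesis by blast
  qed
  then have "\<forall>k. \<exists>N. \<forall>q\<in>RR A. emeasure (Om A) (BB A q N) \<le> ennreal ((1/2)^k)" by blast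
  then show ?thesis by (rule choice)
qed




lemma LL_mono:
  assumes LLs: "\<forall>k. LL (Suc k) = LL k + nk k + (1::nat)"
  shows "k \<le> k' \<Longrightarrow> LL k \<le> LL k'"
  by (rule lift_Suc_mono_le[of LL]) (use LLs in auto)

lemma LL_less:
  assumes LLs: "\<forall>k. LL (Suc k) = LL k + nk k + (1::nat)"
  shows "k < k' \<Longrightarrow> LL k + nk k < LL k'"
proof -
  assume "k < k'"
  then have "Suc k \<le> k'" by simp
  then have "LL (Suc k) \<le> LL k'" by (rule LL_mono[OF LLs])
  then show ?thesis using LLs by simp
qed

lemma wc_b:
  assumes LLs: "\<forall>k. LL (Suc k) = LL k + nk k + (1::nat)" and j: "j < nk k"
  shows "\<not> (\<exists>k'. LL k + j = LL k' + nk k')"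
proof
  assume "\<exists>k'. LL k + j = LL k' + nk k'"
  then obtain k' where e: "LL k + j = LL k' + nk k'" by blast
  consider "k' < k" | "k' = k" | "k < k'" by arith
  then show False
  proof cases
    case 1 then show ?thesis using LL_less[OF LLs 1] e by simp
  next
    case 2 then show ?thesis using e j by simp
  next
    case 3 then show ?thesis using LL_less[OF LLs 3] e j LL_mono[OF LLs, of k' k'] by simp
  qed
qed

lemma cover:
  assumes LLs: "\<forall>k. LL (Suc k) = LL k + nk k + (1::nat)" and L0: "LL 0 = 0"
  shows "\<exists>k. LL k \<le> n \<and> n \<le> LL k + nk k"
proof (induction n)
  case 0 then show ?case using L0 by auto
next
  case (Suc n)
  then obtain k where k: "LL k \<le> n" "n \<le> LL k + nk k" by blast
  show ?case
  proof (cases "Suc n \<le> LL k + nk k")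
    case True then show ?thesis using k by (intro exI[of _ k]) auto
  next
    case False
    then have "Suc n = LL (Suc k)" using k LLs by simp
    then show ?thesis by (intro exI[of _ "Suc k"]) auto
  qed
qed

lemma det_bound:
  fixes S :: "nat \<Rightarrow> real"
  assumes LLs: "\<forall>k. LL (Suc k) = LL k + nk k + (1::nat)"
    and nb1: "\<forall>k. Nf k \<le> nk k"
    and nb2: "\<forall>k. real (nk k) \<ge> (8*W+2) * (real (LL k) + 1 + real (Nf (Suc k)))"
    and W: "W \<ge> 0"
    and Sb: "\<forall>a m. \<bar>S (a + m) - S a\<bar> \<le> W * real m" and S0: "S 0 = 0"
    and blk: "\<forall>k\<ge>K0. \<forall>m. Nf k \<le> m \<and> m \<le> nk k \<longrightarrow> S (LL k + m) - S (LL k) > 3/8 * real m"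
    and k: "k > K0" and m: "m \<le> nk k"
  shows "S (LL k + m) \<ge> real (LL k + m) / 4"
proof -
  obtain k' where k': "k = Suc k'" "k' \<ge> K0" using k by (cases k) auto
  define X where "X = real (nk k')"
  define \<Lambda> where "\<Lambda> = real (LL k') + 1"
  have LLk: "real (LL k) = X + \<Lambda>" using LLs k' by (simp add: X_def \<Lambda>_def)
  have b1: "S (LL k' + nk k') - S (LL k') > 3/8 * X" using blk k' nb1 by (auto simp: X_def)
  have b2: "S (LL k') \<ge> - (W * real (LL k'))" using Sb[rule_format, of 0 "LL k'"] S0 by simp
  have b3: "S (LL k) - S (LL k' + nk k') \<ge> - W"
    using Sb[rule_format, of "LL k' + nk k'" 1] LLs k' by simp
  have WL: "W * \<Lambda> = W * real (LL k') + W" by (simp add: \<Lambda>_def algebra_simps)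
  have SLk: "S (LL k) \<ge> 3/8 * X - W * \<Lambda>" using b1 b2 b3 WL by linarith
  have Xb: "X \<ge> (8*W+2) * (\<Lambda> + real (Nf k))" using nb2 k' by (simp add: X_def \<Lambda>_def add.assoc)
  then have Xb': "X \<ge> 8 * (W * \<Lambda>) + 2 * \<Lambda> + 8 * (W * real (Nf k)) + 2 * real (Nf k)"
    by (simp add: algebra_simps)
  have WN: "W * \<Lambda> \<ge> 0" "W * real (Nf k) \<ge> 0" using W by (auto simp: \<Lambda>_def)
  have Lm: "real (LL k + m) = X + \<Lambda> + real m" using LLk by simp
  show ?thesis
  proof (cases "Nf k \<le> m")
    case True
    have "S (LL k + m) - S (LL k) > 3/8 * real m" using blk k' True m by auto
    then have s1: "S (LL k + m) \<ge> 3/8 * X - W * \<Lambda> + 3/8 * real m" using SLk by linarith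
    have n0: "real (Nf k) \<ge> 0" "real m \<ge> 0" by simp_all
    have e1: "X + real m \<ge> 8 * (W * \<Lambda>) + 2 * \<Lambda>" using Xb' WN n0 by linarith
    have "3/8 * X - W * \<Lambda> + 3/8 * real m - (X + \<Lambda> + real m) / 4 = (X + real m - 8 * (W * \<Lambda>) - 2 * \<Lambda>) / 8"
      by (simp add: field_simps)
    then have "3/8 * X - W * \<Lambda> + 3/8 * real m \<ge> (X + \<Lambda> + real m) / 4" using e1 by simp
    with s1 Lm show ?thesis by simp
  next
    case False
    have "S (LL k + m) - S (LL k) \<ge> - (W * real m)" using Sb[rule_format, of "LL k" m] by linarith
    moreover have "W * real m \<le> W * real (Nf k)" using False W by (intro mult_left_mono) auto
    moreover have "real m \<le> real (Nf k)" using False by simp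
    ultimately have s1: "S (LL k + m) \<ge> 3/8 * X - W * \<Lambda> - W * real (Nf k)" using SLk by linarith
    have n0: "real (Nf k) \<ge> 0" "real m \<ge> 0" by simp_all
    have e1: "X - 2 * real m \<ge> 8 * (W * \<Lambda>) + 2 * \<Lambda> + 8 * (W * real (Nf k))"
      using Xb' WN n0 \<open>real m \<le> real (Nf k)\<close> by linarith
    have "3/8 * X - W * \<Lambda> - W * real (Nf k) - (X + \<Lambda> + real m) / 4 = (X - 2 * real m - 8 * (W * \<Lambda>) - 2 * \<Lambda> - 8 * (W * real (Nf k))) / 8"
      by (simp add: field_simps)
    then have "3/8 * X - W * \<Lambda> - W * real (Nf k) \<ge> (X + \<Lambda> + real m) / 4" using e1 by simp
    with s1 Lm show ?thesis by simp
  qed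
qed

lemma Sb_lemma:
  fixes g :: "nat \<Rightarrow> real"
  assumes "\<forall>i. \<bar>g i\<bar> \<le> W"
  shows "\<bar>(\<Sum>i<a + m. g i) - (\<Sum>i<a. g i)\<bar> \<le> W * real m"
proof (induction m)
  case 0 then show ?case by simp
next
  case (Suc m)
  have "(\<Sum>i<a + Suc m. g i) - (\<Sum>i<a. g i) = ((\<Sum>i<a + m. g i) - (\<Sum>i<a. g i)) + g (a + m)" by simp
  moreover have "\<bar>g (a + m)\<bar> \<le> W" using assms by auto
  ultimately show ?case using Suc by (simp add: algebra_simps)
qed




declare meas_TT_shift_phi[measurable]

theorem part3: "\<not> (\<exists>A. wf_pwa A \<and> (\<forall>w. L_as A w = ereal (L_F w)))"
proof
  assume "\<exists>A. wf_pwa A \<and> (\<forall>w. L_as A w = ereal (L_F w))"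
  then obtain A where wf: "wf_pwa A" and H: "\<forall>w. L_as A w = ereal (L_F w)" by blast
  interpret prob_space "Om A" by (rule prob_Om)
  obtain Nf where NfP: "\<forall>k. \<forall>q\<in>RR A. emeasure (Om A) (BB A q (Nf k)) \<le> ennreal ((1/2)^k)"
    using uniform_N[OF wf H] by blast
  have finS: "finite (states A)" using wf by (simp add: wf_pwa_def)
  define W where "W = 1 + (\<Sum>x\<in>states A \<times> (UNIV::letter set) \<times> states A. \<bar>wt A (fst x) (fst (snd x)) (snd (snd x))\<bar>)"
  have Wb: "\<bar>wt A q \<sigma> q'\<bar> \<le> W" if "q \<in> states A" "q' \<in> states A" for q \<sigma> q'
  proof -
    have "\<bar>wt A q \<sigma> q'\<bar> \<le> (\<Sum>x\<in>states A \<times> (UNIV::letter set) \<times> states A. \<bar>wt A (fst x) (fst (snd x)) (snd (snd x))\<bar>)"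
      using member_le_sum[of "(q, \<sigma>, q')" "states A \<times> (UNIV::letter set) \<times> states A"
          "\<lambda>x. \<bar>wt A (fst x) (fst (snd x)) (snd (snd x))\<bar>"] that finS by auto
    then show ?thesis by (simp add: W_def)
  qed
  have W0: "W \<ge> 0" unfolding W_def by (intro add_nonneg_nonneg sum_nonneg) auto
  define c where "c = nat \<lceil>8*W + 2\<rceil>"
  have c: "real c \<ge> 8*W + 2" unfolding c_def by (rule real_nat_ceiling_ge)
  define nn where "nn k l = max (Nf k) (c * (l + 1 + Nf (Suc k)))" for k l
  define LL where "LL = rec_nat 0 (\<lambda>k l. l + nn k l + 1)"
  have LL0: "LL 0 = 0" by (simp add: LL_def)
  have LLS: "LL (Suc k) = LL k + nn k (LL k) + 1" for k by (simp add: LL_def)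
  define nk where "nk k = nn k (LL k)" for k
  have LLs: "\<forall>k. LL (Suc k) = LL k + nk k + 1" by (simp add: LLS nk_def)
  have nb1: "\<forall>k. Nf k \<le> nk k" by (simp add: nk_def nn_def)
  have nb2: "\<forall>k. real (nk k) \<ge> (8*W+2) * (real (LL k) + 1 + real (Nf (Suc k)))"
  proof
    fix k
    have "(8*W+2) * (real (LL k) + 1 + real (Nf (Suc k))) \<le> real c * (real (LL k) + 1 + real (Nf (Suc k)))"
      by (rule mult_right_mono[OF c]) simp
    also have "\<dots> = real (c * (LL k + 1 + Nf (Suc k)))" by (simp add: algebra_simps)
    also have "\<dots> \<le> real (nk k)" by (subst of_nat_le_iff) (simp add: nk_def nn_def)
    finally show "real (nk k) \<ge> (8*W+2) * (real (LL k) + 1 + real (Nf (Suc k)))" .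
  qed
  define wc where "wc i = (if \<exists>k. i = LL k + nk k then La else Lb)" for i
  have wcb: "wc (LL k + j) = Lb" if "j < nk k" for k j
    using wc_b[OF LLs that] by (simp add: wc_def)
  have inf: "infinite {i. wc i = La}"
  proof -
    have sm: "strict_mono (\<lambda>k. LL k + nk k)"
      unfolding strict_mono_def
    proof (intro allI impI)
      fix x y :: nat assume "x < y"
      then have "LL x + nk x < LL y" by (rule LL_less[OF LLs])
      then show "LL x + nk x < LL y + nk y" by simp
    qed
    have "{i. wc i = La} = range (\<lambda>k. LL k + nk k)" by (auto simp: wc_def)
    moreover have "infinite (range (\<lambda>k. LL k + nk k))"
      by (rule range_inj_infinite) (rule strict_mono_imp_inj_on[OF sm])
    ultimately show ?thesis by simp
  qed
  have LFw: "L_F wc = 0" using inf by (simp add: L_F_def)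
  define Bad where "Bad k = {Y \<in> space (Om A). \<exists>m. Nf k \<le> m \<and> m \<le> nk k \<and>
     TT A (phi wc Y (LL k)) (shiftY (LL k) Y) m \<le> 3/8 * real m}" for k
  have Bad_sets[measurable]: "Bad k \<in> sets (Om A)" for k unfolding Bad_def by measurable
  have AE_R: "AE Y in Om A. phi wc Y (LL k) \<in> RR A" for k
  proof -
    define v where "v i = (if i < LL k then wc i else Lb)" for i
    have v: "\<forall>i\<ge>LL k. v i = Lb" by (simp add: v_def)
    have pv: "phi v Y (LL k) = phi wc Y (LL k)" for Y
      by (rule phi_word_local[of "LL k"]) (auto simp: v_def)
    have "AE Y in Om A. phi v Y (LL k) \<noteq> q" if q: "q \<notin> RR A" for q
    proof -
      have "\<not> emeasure (Om A) {Y \<in> space (Om A). phi v Y (LL k) = q} > 0"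
        using q v unfolding RR_def by blast
      then have z: "emeasure (Om A) {Y \<in> space (Om A). phi v Y (LL k) = q} = 0" by (simp add: not_gr_zero)
      show ?thesis by (subst AE_iff_measurable[OF Cq_sets]) (use z in auto)
    qed
    then have "AE Y in Om A. \<forall>q. q \<notin> RR A \<longrightarrow> phi v Y (LL k) \<noteq> q"
      by (subst AE_all_countable) auto
    then show ?thesis by eventually_elim (auto simp: pv)
  qed
  have Bad_bound: "emeasure (Om A) (Bad k) \<le> ennreal (real (card (RR A)) * (1/2)^k)" for k
  proof -
    define U where "U = (\<Union>q\<in>RR A. {Y \<in> space (Om A). shiftY (LL k) Y \<in> BB A q (Nf k)})"
    have mq: "{Y \<in> space (Om A). shiftY (LL k) Y \<in> BB A q (Nf k)} \<in> sets (Om A)" for q by measurable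
    have Usets: "U \<in> sets (Om A)" unfolding U_def
      by (rule sets.finite_UN[OF finite_RR[OF wf]]) measurable
    have "AE Y in Om A. Y \<in> Bad k \<longrightarrow> Y \<in> U"
      using AE_R[of k]
    proof eventually_elim
      case (elim Y)
      show ?case
      proof
        assume "Y \<in> Bad k"
        then obtain m where m: "Nf k \<le> m" "TT A (phi wc Y (LL k)) (shiftY (LL k) Y) m \<le> 3/8 * real m"
          by (auto simp: Bad_def)
        then have "shiftY (LL k) Y \<in> BB A (phi wc Y (LL k)) (Nf k)" by (auto simp: BB_def)
        then show "Y \<in> U" using elim by (auto simp: U_def)
      qed
    qed
    then have "emeasure (Om A) (Bad k) \<le> emeasure (Om A) U" by (rule emeasure_mono_AE[OF _ Usets])
    also have "\<dots> \<le> (\<Sum>q\<in>RR A. emeasure (Om A) {Y \<in> space (Om A). shiftY (LL k) Y \<in> BB A q (Nf k)})"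
      unfolding U_def by (rule emeasure_subadditive_finite[OF finite_RR[OF wf]]) (use mq in blast)
    also have "\<dots> = (\<Sum>q\<in>RR A. emeasure (Om A) (BB A q (Nf k)))"
      by (intro sum.cong refl shift_invariant BB_sets)
    also have "\<dots> \<le> (\<Sum>q\<in>RR A. ennreal ((1/2)^k))"
      by (intro sum_mono) (use NfP in auto)
    also have "\<dots> = ennreal (real (card (RR A)) * (1/2)^k)"
      by (simp add: ennreal_of_nat_eq_real_of_nat ennreal_mult)
    finally show ?thesis .
  qed
  have meas_bound: "measure (Om A) (Bad k) \<le> real (card (RR A)) * (1/2)^k" for k
    using Bad_bound[of k] by (simp add: emeasure_eq_measure ennreal_le_iff)
  have summ: "summable (\<lambda>k. measure (Om A) (Bad k))"
  proof (rule summable_comparison_test')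
    show "summable (\<lambda>k. real (card (RR A)) * (1/2)^k)"
      by (rule summable_mult) (rule summable_geometric, simp)
    show "norm (measure (Om A) (Bad k)) \<le> real (card (RR A)) * (1/2)^k" for k
      using meas_bound[of k] by simp
  qed
  have BC: "AE Y in Om A. eventually (\<lambda>k. Y \<in> space (Om A) - Bad k) sequentially"
    by (rule borel_cantelli_AE1[OF Bad_sets _ summ]) (simp add: less_top[symmetric])
  have AE14: "AE Y in Om A. LimAvg (weights A wc (phi wc Y)) \<ge> ereal (1/4)"
    using BC AE_good[OF wf]
  proof eventually_elim
    case (elim Y)
    obtain K0 where K0: "\<And>k. k \<ge> K0 \<Longrightarrow> Y \<notin> Bad k"
      using elim(1) by (auto simp: eventually_sequentially)
    define S where "S = SS A wc Y"
    have gb: "\<bar>wt A (phi wc Y i) (wc i) (phi wc Y (Suc i))\<bar> \<le> W" for i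
      by (rule Wb) (use good_phi_states[OF wf elim(2), of wc i] good_phi_states[OF wf elim(2), of wc "Suc i"] in auto)
    have Sb: "\<forall>a m. \<bar>S (a + m) - S a\<bar> \<le> W * real m"
      unfolding S_def SS_def using Sb_lemma[of "\<lambda>i. wt A (phi wc Y i) (wc i) (phi wc Y (Suc i))" W] gb by blast
    have S0: "S 0 = 0" by (simp add: S_def SS_def)
    have blk: "\<forall>k\<ge>K0. \<forall>m. Nf k \<le> m \<and> m \<le> nk k \<longrightarrow> S (LL k + m) - S (LL k) > 3/8 * real m"
    proof (intro allI impI)
      fix k m assume k: "k \<ge> K0" and m: "Nf k \<le> m \<and> m \<le> nk k"
      have nb: "\<not> TT A (phi wc Y (LL k)) (shiftY (LL k) Y) m \<le> 3/8 * real m"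
        using K0[OF k] m by (auto simp: Bad_def)
      have "\<forall>j<m. wc (LL k + j) = Lb" using m wcb by auto
      then have "SS A wc Y (LL k + m) = SS A wc Y (LL k) + TT A (phi wc Y (LL k)) (shiftY (LL k) Y) m"
        by (rule SS_tail)
      then show "S (LL k + m) - S (LL k) > 3/8 * real m" using nb by (simp add: S_def)
    qed
    have bound: "S n \<ge> real n / 4" if n: "n \<ge> LL (Suc K0)" for n
    proof -
      obtain k where k: "LL k \<le> n" "n \<le> LL k + nk k" using cover[OF LLs LL0] by blast
      have kK: "k > K0"
      proof (rule ccontr)
        assume "\<not> k > K0"
        then have "k < Suc K0" by simp
        then have "LL k + nk k < LL (Suc K0)" by (rule LL_less[OF LLs])
        then show False using k n by simp
      qed
      have "S (LL k + (n - LL k)) \<ge> real (LL k + (n - LL k)) / 4"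
        by (rule det_bound[OF LLs nb1 nb2 W0 Sb S0 blk kK]) (use k in simp)
      then show ?thesis using k by simp
    qed
    have "eventually (\<lambda>n. ereal (1/4) \<le> ereal (S n / real n)) sequentially"
      unfolding eventually_sequentially
    proof (intro exI[of _ "max 1 (LL (Suc K0))"] allI impI)
      fix n assume "max 1 (LL (Suc K0)) \<le> n"
      then have "n \<ge> LL (Suc K0)" "real n > 0" by auto
      then show "ereal (1/4) \<le> ereal (S n / real n)" using bound by (simp add: field_simps)
    qed
    then have "ereal (1/4) \<le> liminf (\<lambda>n. ereal (S n / real n))" by (rule Liminf_bounded)
    then show ?case by (simp add: LimAvg_SS S_def)
  qed
  have "emeasure (Om A) {Y \<in> space (Om A). LimAvg (weights A wc (phi wc Y)) \<ge> ereal (1/4)} = 1"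
  proof (rule emeasure_eq_1_AE)
    show "{Y \<in> space (Om A). LimAvg (weights A wc (phi wc Y)) \<ge> ereal (1/4)} \<in> sets (Om A)" by measurable
    show "AE Y in Om A. Y \<in> {Y \<in> space (Om A). LimAvg (weights A wc (phi wc Y)) \<ge> ereal (1/4)}"
      using AE14 by simp
  qed
  then have "emeasure (run_measure A wc) {r \<in> space (run_measure A wc). LimAvg (weights A wc r) \<ge> ereal (1/4)} = 1"
    using transfer_set[OF wf, of wc "1/4"] by simp
  then have "ereal (1/4) \<le> L_as A wc" unfolding L_as_def by (intro Sup_upper) auto
  then show False using H LFw by simp
qed

theorem lemma2_main:
  shows "(\<exists>A. wf_pwa A \<and> (\<forall>w. L_max A w = ereal (L_F w))) \<and>
         (\<exists>A. wf_pwa A \<and> (\<forall>w. L_pos A w = ereal (L_F w))) \<and>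
         \<not> (\<exists>A. wf_pwa A \<and> (\<forall>w. L_as A w = ereal (L_F w)))"
  using part1 part2 part3 wf_autB by blast



theorem lemma2:
  shows "(\<exists>A. wf_pwa A \<and> (\<forall>w. L_max A w = ereal (L_F w))) \<and>
         (\<exists>A. wf_pwa A \<and> (\<forall>w. L_pos A w = ereal (L_F w))) \<and>
         \<not> (\<exists>A. wf_pwa A \<and> (\<forall>w. L_as A w = ereal (L_F w)))"
  by (rule lemma2_main)

end
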